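(* For every $0<a<2$, as $\theta\to\infty$, \[f'''(\theta)=O\big(e^{-a\theta}\big)\qquad\text{and}\qquad j''(\theta)=O\big(e^{-a\theta}\big).\]
   Context: Define $\lambda:[0,\infty)\to(0,1/4]$ by $\lambda(0)=1/4$ and, for $\theta>0$, $\lambda(\theta)$ is the unique $\lambda\in(0,1/4)$ with $-1+\frac{\operatorname{artanh}(\sqrt{1-4\lambda})}{\sqrt{1-4\lambda}}=\theta$. For $\theta>0$ set $f(\theta)=-\ln\lambda(\theta)-2\theta-\theta\ln\big(1-4\lambda(\theta)\big)$ and $j(\theta)=-\tfrac12\ln\big(1-4(\theta+1)\lambda(\theta)\big)+\tfrac12\ln 2$. *)

theory Defs
  imports "HOL-Analysis.Analysis" "HOL-Library.Landau_Symbols"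
begin

text \<open>lambda(theta): lambda(0) = 1/4; for theta > 0 the unique l in (0,1/4) with
  -1 + artanh(sqrt(1-4l))/sqrt(1-4l) = theta.  Only values on [0,inf) matter.\<close>
definition lam :: "real \<Rightarrow> real" where
  "lam \<theta> = (if \<theta> \<le> 0 then 1/4 else
     (THE l. 0 < l \<and> l < 1/4 \<and>
        -1 + artanh (sqrt (1 - 4*l)) / sqrt (1 - 4*l) = \<theta>))"

definition f_fun :: "real \<Rightarrow> real" where
  "f_fun \<theta> = - ln (lam \<theta>) - 2*\<theta> - \<theta> * ln (1 - 4 * lam \<theta>)"

definition j_fun :: "real \<Rightarrow> real" where
  "j_fun \<theta> = - (1/2) * ln (1 - 4*(\<theta>+1) * lam \<theta>) + (1/2) * ln 2"

end

theory Submission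
  imports Defs "HOL-Real_Asymp.Real_Asymp"
begin


lemma abs_div_q3: fixes N q :: real assumes "1/2 \<le> q" shows "\<bar>N / q^3\<bar> \<le> 8 * \<bar>N\<bar>"
proof -
  have "(1/2)^3 \<le> q^3" by (rule power_mono) (use assms in auto)
  hence q3: "q^3 \<ge> 1/8" by (simp add: power_divide)
  have qp: "q > 0" using assms by linarith
  hence "\<bar>q^3\<bar> = q^3" by simp
  hence "\<bar>N / q^3\<bar> = \<bar>N\<bar> / q^3" by (simp add: abs_div)
  also have "\<dots> \<le> \<bar>N\<bar> / (1/8)" by (rule divide_left_mono) (use q3 qp in auto)
  finally show ?thesis by simp
qed

lemma abs_div_q4: fixes N q :: real assumes "1/2 \<le> q" shows "\<bar>N / (2*q^4)\<bar> \<le> 8 * \<bar>N\<bar>"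
proof -
  have "(1/2)^4 \<le> q^4" by (rule power_mono) (use assms in auto)
  hence q3: "2*q^4 \<ge> 1/8" by (simp add: power_divide)
  have "\<bar>N / (2*q^4)\<bar> = \<bar>N\<bar> / (2*q^4)" using q3 by (simp add: abs_div)
  also have "\<dots> \<le> \<bar>N\<bar> / (1/8)" by (rule divide_left_mono) (use q3 in auto)
  finally show ?thesis by simp
qed

lemma F3_num_bound: fixes s u q t :: real
  assumes "0\<le>s" "s\<le>1" "0\<le>u" "u\<le>1" "1/2\<le>q" "q\<le>1" "0\<le>t"
  shows "\<bar>4* s^2*u*q + 2*u^2*(2*(1+t)* s^2 - q)\<bar> \<le> 10*u*(1+t)"
proof -
  have s2: "0 \<le> s^2" "s^2 \<le> 1" using assms power_le_one by auto
  have u2: "u^2 \<le> u" using assms by (simp add: power2_eq_square mult_left_le_one_le)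
  have A: "\<bar>4* s^2*u*q\<bar> \<le> 4*u"
  proof -
    have "s^2 * q \<le> 1" using s2 assms mult_le_one[of "s^2" q] by auto
    hence "u * (s^2 * q) \<le> u" using assms mult_left_le by blast
    moreover have "0 \<le> 4* s^2*u*q" using assms s2 by simp
    ultimately show ?thesis by (simp add: algebra_simps)
  qed
  have W: "\<bar>2*(1+t)* s^2 - q\<bar> \<le> 3*(1+t)"
  proof -
    define X where "X = (1+t)* s^2"
    have "X \<le> 1+t" using s2 assms mult_left_le by (auto simp: X_def)
    moreover have "0 \<le> X" using s2 assms by (simp add: X_def)
    ultimately have "\<bar>2*X - q\<bar> \<le> 3*(1+t)" using assms by (simp add: abs_le_iff)
    moreover have "2*(1+t)* s^2 = 2*X" by (simp add: X_def)
    ultimately show ?thesis by simp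
  qed
  have B: "\<bar>2*u^2*(2*(1+t)* s^2 - q)\<bar> \<le> 6*u*(1+t)"
  proof -
    have "\<bar>2*u^2*(2*(1+t)* s^2 - q)\<bar> = 2*u^2*\<bar>2*(1+t)* s^2 - q\<bar>" by (simp add: abs_mult)
    also have "\<dots> \<le> 2*u*(3*(1+t))" using W u2 assms by (intro mult_mono) auto
    finally show ?thesis by (simp add: algebra_simps)
  qed
  have "\<bar>4* s^2*u*q + 2*u^2*(2*(1+t)* s^2 - q)\<bar> \<le> 4*u + 6*u*(1+t)" using A B by linarith
  also have "\<dots> \<le> 10*u*(1+t)" using assms by (simp add: algebra_simps)
  finally show ?thesis .
qed

lemma J2_num_bound: fixes s u q t W :: real
  assumes "0\<le>s" "s\<le>1" "0\<le>u" "u\<le>1" "1/2\<le>q" "q\<le>1" "0\<le>t" "W = 2*(1+t)* s^2 - q"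
  shows "\<bar>q * (-2* s^2*u*W + 2* s^2*u*q + 4*(1+t)* s^2*u^2 - u^2*W) - 2*u^2*W^2\<bar> \<le> 33*u*(1+t)^2"
proof -
  have s2: "0 \<le> s^2" "s^2 \<le> 1" using assms power_le_one by auto
  have u2: "u^2 \<le> u" "0 \<le> u^2" using assms by (simp_all add: power2_eq_square mult_left_le_one_le)
  have W: "\<bar>W\<bar> \<le> 3*(1+t)"
  proof -
    define X where "X = (1+t)* s^2"
    have "X \<le> 1+t" using s2 assms mult_left_le by (auto simp: X_def)
    moreover have "0 \<le> X" using s2 assms by (simp add: X_def)
    ultimately have "\<bar>2*X - q\<bar> \<le> 3*(1+t)" using assms by (simp add: abs_le_iff)
    moreover have "W = 2*X - q" by (simp add: X_def assms(8))
    ultimately show ?thesis by simp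
  qed
  have T1: "\<bar>2* s^2*u*W\<bar> \<le> 6*u*(1+t)"
  proof -
    have "\<bar>2* s^2*u*W\<bar> = 2*(s^2*(u*\<bar>W\<bar>))" using s2 assms by (simp add: abs_mult)
    also have "\<dots> \<le> 2*(1*(u*(3*(1+t))))" using s2 W assms
      by (intro mult_left_mono mult_mono) auto
    finally show ?thesis by (simp add: algebra_simps)
  qed
  have T2: "\<bar>2* s^2*u*q\<bar> \<le> 2*u"
  proof -
    have "\<bar>2* s^2*u*q\<bar> = 2*(u*(s^2*q))" using s2 assms by (simp add: abs_mult)
    also have "\<dots> \<le> 2*(u*1)" using s2 assms mult_le_one[of "s^2" q]
      by (intro mult_left_mono) auto
    finally show ?thesis by (simp add: algebra_simps)
  qed
  have T3: "\<bar>4*(1+t)* s^2*u^2\<bar> \<le> 4*u*(1+t)"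
  proof -
    have "\<bar>4*(1+t)* s^2*u^2\<bar> = 4*((1+t)*(s^2*u^2))" using s2 assms by (simp add: abs_mult)
    also have "\<dots> \<le> 4*((1+t)*(1*u))" using s2 u2 assms
      by (intro mult_left_mono mult_mono) auto
    finally show ?thesis by (simp add: algebra_simps)
  qed
  have T4: "\<bar>u^2*W\<bar> \<le> 3*u*(1+t)"
  proof -
    have "\<bar>u^2*W\<bar> = u^2*\<bar>W\<bar>" by (simp add: abs_mult)
    also have "\<dots> \<le> u*(3*(1+t))" using u2 W assms by (intro mult_mono) auto
    finally show ?thesis by (simp add: algebra_simps)
  qed
  have T5: "\<bar>2*u^2*W^2\<bar> \<le> 18*u*(1+t)^2"
  proof -
    have "W^2 \<le> (3*(1+t))^2" using W by (metis abs_le_square_iff abs_of_nonneg assms(7) le_add_same_cancel1 mult_nonneg_nonneg zero_le_numeral zero_le_one order_trans abs_ge_zero)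
    hence "\<bar>2*u^2*W^2\<bar> = 2*(u^2*W^2)" by simp
    also have "\<dots> \<le> 2*(u*(3*(1+t))^2)" using u2 assms(3) \<open>W^2 \<le> (3*(1+t))^2\<close>
      by (intro mult_left_mono mult_mono) auto
    also have "\<dots> = 18*u*(1+t)^2" by (simp add: power2_eq_square algebra_simps)
    finally show ?thesis .
  qed
  define I where "I = -2* s^2*u*W + 2* s^2*u*q + 4*(1+t)* s^2*u^2 - u^2*W"
  have "\<bar>I\<bar> \<le> 13*u*(1+t) + 2*u" unfolding I_def using T1 T2 T3 T4 by linarith
  moreover have "\<bar>q * I\<bar> \<le> \<bar>I\<bar>"
  proof -
    have "\<bar>q * I\<bar> = q * \<bar>I\<bar>" using assms by (simp add: abs_mult)
    also have "\<dots> \<le> 1 * \<bar>I\<bar>" using assms by (intro mult_right_mono) auto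
    finally show ?thesis by simp
  qed
  ultimately have "\<bar>q * I\<bar> \<le> 13*u*(1+t) + 2*u" by linarith
  hence "\<bar>q * I - 2*u^2*W^2\<bar> \<le> 13*u*(1+t) + 2*u + 18*u*(1+t)^2" using T5 by linarith
  also have "\<dots> \<le> 33*u*(1+t)^2"
  proof -
    have "1 + t \<le> (1+t)^2" using assms by (simp add: power2_eq_square)
    moreover have "1 \<le> 1 + t" using assms by simp
    ultimately have "1 \<le> (1+t)^2" by linarith
    have "u*(1+t) \<le> u*(1+t)^2" using assms \<open>1 + t \<le> (1+t)^2\<close> by (intro mult_left_mono) auto
    moreover have "u*1 \<le> u*(1+t)^2" using assms \<open>1 \<le> (1+t)^2\<close> by (intro mult_left_mono) auto
    ultimately have "u*(1+t) \<le> u*(1+t)^2" "u \<le> u*(1+t)^2" by auto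
    thus ?thesis by linarith
  qed
  finally show ?thesis unfolding I_def .
qed



lemma sq_lt1: fixes s :: real assumes "0 \<le> s" "s < 1" shows "s^2 < 1"
  using power_strict_mono[of s 1 2] assms by simp

definition T :: "real \<Rightarrow> real" where "T s = artanh s / s - 1"

lemma artanh_lt: fixes s :: real assumes "0 < s" "s < 1" shows "artanh s < s / (1 - s^2)"
proof -
  let ?h = "\<lambda>x::real. x / (1 - x^2) - artanh x"
  have d: "DERIV ?h x :> ((1 - x^2) + 2*x*x)/(1-x^2)^2 - 1/(1-x^2)" if x: "0 \<le> x" "x \<le> s" for x
  proof -
    have x1: "x < 1" "x > -1" using x assms by auto
    have "x^2 < 1" using x1 by (simp add: abs_square_less_1 abs_less_iff)
    hence ne: "1 - x^2 \<noteq> 0" by simp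
    show ?thesis
      by (rule derivative_eq_intros refl | use x1 ne in force)+ (simp add: power2_eq_square)
  qed
  have "?h 0 < ?h s"
  proof (rule DERIV_pos_imp_increasing_open[of 0 s ?h])
    show "0 < s" by fact
    show "continuous_on {0..s} ?h"
      by (rule DERIV_atLeastAtMost_imp_continuous_on) (use d in blast)
    fix x assume x: "0 < x" "x < s"
    have "x^2 < 1" using x assms by (intro sq_lt1) auto
    hence ne: "1 - x^2 \<noteq> 0" by simp
    have "((1 - x^2) + 2*x*x)/(1-x^2)^2 - 1/(1-x^2) = 2*x^2/(1-x^2)^2"
    proof -
      define d where "d = 1 - x^2"
      have d: "d \<noteq> 0" "x^2 = 1 - d" using ne by (auto simp: d_def)
      have "(d + 2*x^2)/d^2 - 1/d = 2*x^2/d^2" using d(1) by (simp add: field_simps power2_eq_square)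
      thus ?thesis by (simp add: d_def power2_eq_square)
    qed
    moreover have "2*x^2/(1-x^2)^2 > 0" using x ne by simp
    ultimately show "\<exists>y. DERIV ?h x :> y \<and> y > 0" using d[of x] x by auto
  qed
  thus ?thesis by simp
qed

lemma T_deriv: fixes s :: real assumes "0 < s" "s < 1"
  shows "DERIV T s :> (1/(1-s^2))/s - artanh s / s^2"
proof -
  have "s^2 < 1" using assms by (intro sq_lt1) auto
  hence ne: "1 - s^2 \<noteq> 0" by simp
  show ?thesis unfolding T_def[abs_def]
    by (rule derivative_eq_intros refl | use assms ne in force)+
      (use assms ne in \<open>simp add: field_simps power2_eq_square\<close>)
qed

lemma T_deriv_pos: fixes s :: real assumes "0 < s" "s < 1"
  shows "(1/(1-s^2))/s - artanh s / s^2 > 0"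
proof -
  have "s^2 < 1" using assms by (intro sq_lt1) auto
  hence ne: "1 - s^2 \<noteq> 0" by simp
  have "(1/(1-s^2))/s - artanh s / s^2 = (s/(1-s^2) - artanh s)/s^2"
    using assms ne by (simp add: field_simps power2_eq_square)
  thus ?thesis using artanh_lt[OF assms] assms by simp
qed

lemma T_mono: assumes "0 < x" "x < y" "y < 1" shows "T x < T y"
  by (rule DERIV_pos_imp_increasing[OF assms(2)]) (use T_deriv T_deriv_pos assms in force)

lemma T_inj: assumes "0 < x" "x < 1" "0 < y" "y < 1" "T x = T y" shows "x = y"
  using T_mono assms by (metis linorder_neqE_linordered_idom order_less_irrefl)

lemma T_cont: assumes "0 < s" "s < 1" shows "isCont T s"
  using T_deriv[OF assms] DERIV_isCont by blast

definition th1 :: real where "th1 = max 0 (T (1/2))"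

lemma T_exists: assumes "th1 < \<theta>" shows "\<exists>s. 1/2 < s \<and> s < 1 \<and> T s = \<theta>"
proof -
  have th0: "0 < \<theta>" and th: "T (1/2) < \<theta>" using assms by (auto simp: th1_def)
  define b where "b = tanh (\<theta> + 2)"
  have b: "0 < b" "b < 1" using th0 tanh_real_lt_1 by (auto simp: b_def)
  have ab: "artanh b = \<theta> + 2" by (simp add: b_def artanh_tanh_real)
  have "(\<theta> + 2) / b \<ge> \<theta> + 2" using b th0 by (simp add: le_divide_eq)
  hence Tb: "T b > \<theta>" unfolding T_def ab by linarith
  have b2: "1/2 < b"
  proof (rule ccontr)
    assume "\<not> 1/2 < b"
    hence "b < 1/2 \<or> b = 1/2" by auto
    hence "T b \<le> T (1/2)"
    proof (elim disjE)
      assume "b < 1/2" thus ?thesis using T_mono[of b "1/2"] b by simp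
    next
      assume "b = 1/2" thus ?thesis by (metis order_refl)
    qed
    thus False using Tb th by linarith
  qed
  have "continuous_on {1/2..b} T"
    by (rule continuous_at_imp_continuous_on) (use T_cont b in force)
  then obtain s where s: "1/2 \<le> s" "s \<le> b" "T s = \<theta>"
    using IVT'[of T "1/2" \<theta> b] th Tb b2 by force
  have "s \<noteq> 1/2"
  proof
    assume "s = 1/2" hence "T s = T (1/2)" by (rule arg_cong)
    thus False using s th by linarith
  qed
  thus ?thesis using s b by (intro exI[of _ s]) auto
qed

definition sig :: "real \<Rightarrow> real" where "sig \<theta> = (THE s. 0 < s \<and> s < 1 \<and> T s = \<theta>)"

lemma sig_T: assumes "0 < z" "z < 1" shows "sig (T z) = z"
  unfolding sig_def by (rule the_equality) (use assms T_inj in auto)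

lemma sig: assumes "th1 < \<theta>" shows "1/2 < sig \<theta>" "sig \<theta> < 1" "T (sig \<theta>) = \<theta>"
proof -
  obtain s where s: "1/2 < s" "s < 1" "T s = \<theta>" using T_exists[OF assms] by blast
  have "sig \<theta> = s" using sig_T[of s] s by auto
  thus "1/2 < sig \<theta>" "sig \<theta> < 1" "T (sig \<theta>) = \<theta>" using s by auto
qed

lemma th1_pos: "th1 \<ge> 0" by (simp add: th1_def)

lemma lam_eq: assumes "th1 < \<theta>" shows "lam \<theta> = (1 - sig \<theta> ^ 2) / 4"
proof -
  have th: "\<not> \<theta> \<le> 0" using assms th1_pos by linarith
  define s where "s = sig \<theta>"
  have s: "1/2 < s" "s < 1" "T s = \<theta>" using sig[OF assms] by (auto simp: s_def)
  have s2: "s^2 < 1" using s by (intro sq_lt1) auto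
  have P: "0 < l \<and> l < 1/4 \<and> -1 + artanh (sqrt (1 - 4*l)) / sqrt (1 - 4*l) = \<theta>
     \<longleftrightarrow> (0 < l \<and> l < 1/4 \<and> sqrt (1 - 4*l) = s)" for l
  proof
    assume h: "0 < l \<and> l < 1/4 \<and> -1 + artanh (sqrt (1 - 4*l)) / sqrt (1 - 4*l) = \<theta>"
    define r where "r = sqrt (1 - 4*l)"
    have r: "0 < r" "r < 1" using h by (auto simp: r_def real_sqrt_lt_1_iff)
    have "T r = \<theta>" using h by (simp add: T_def r_def)
    hence "r = s" using T_inj[of r s] r s by auto
    thus "0 < l \<and> l < 1/4 \<and> sqrt (1 - 4*l) = s" using h by (simp add: r_def)
  next
    assume h: "0 < l \<and> l < 1/4 \<and> sqrt (1 - 4*l) = s"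
    thus "0 < l \<and> l < 1/4 \<and> -1 + artanh (sqrt (1 - 4*l)) / sqrt (1 - 4*l) = \<theta>"
      using s by (simp add: T_def)
  qed
  have "lam \<theta> = (THE l. 0 < l \<and> l < 1/4 \<and> sqrt (1 - 4*l) = s)"
    unfolding lam_def using th P by simp
  also have "\<dots> = (1 - s^2)/4"
  proof (rule the_equality)
    have "1 - 4*((1 - s^2)/4) = s^2" by (simp add: field_simps)
    moreover have "0 < s^2" using s by simp
    ultimately show "0 < (1 - s^2)/4 \<and> (1 - s^2)/4 < 1/4 \<and> sqrt (1 - 4*((1 - s^2)/4)) = s"
      using s s2 by simp
  next
    fix l assume "0 < l \<and> l < 1/4 \<and> sqrt (1 - 4*l) = s"
    hence "s^2 = 1 - 4*l" by auto
    thus "l = (1 - s^2)/4" by simp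
  qed
  finally show ?thesis by (simp add: s_def)
qed

definition qq :: "real \<Rightarrow> real" where "qq \<theta> = sig \<theta> ^ 2 - \<theta> * (1 - sig \<theta> ^ 2)"

lemma sig_deriv: assumes "th1 < \<theta>"
  shows "DERIV sig \<theta> :> sig \<theta> * (1 - sig \<theta>^2) / qq \<theta>" "qq \<theta> > 0"
proof -
  define s where "s = sig \<theta>"
  have s: "1/2 < s" "s < 1" "T s = \<theta>" using sig[OF assms] by (auto simp: s_def)
  have s2: "s^2 < 1" using s by (intro sq_lt1) auto
  define D where "D = (1/(1-s^2))/s - artanh s / s^2"
  have Dpos: "D > 0" unfolding D_def by (rule T_deriv_pos) (use s in auto)
  have at: "artanh s = s * (\<theta> + 1)" using s by (simp add: T_def field_simps)
  have "D = (s^2 - \<theta>*(1 - s^2)) / (s * (1 - s^2))"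
  proof -
    define d where "d = 1 - s^2"
    have d: "d \<noteq> 0" "s^2 = 1 - d" using s2 by (auto simp: d_def)
    have "(1/d)/s - s*(\<theta>+1)/s^2 = (1 - d - \<theta>*d)/(s*d)" using d(1) s
      by (simp add: field_simps power2_eq_square)
    thus ?thesis unfolding D_def at d_def[symmetric] using d by simp
  qed
  hence Dq: "D = qq \<theta> / (s * (1 - s^2))" by (simp add: qq_def s_def)
  have "s * (1 - s^2) > 0" using s s2 by simp
  thus qpos: "qq \<theta> > 0" using Dpos Dq by (simp add: zero_less_divide_iff)
  have "DERIV sig \<theta> :> inverse D"
  proof (rule DERIV_inverse_function[where f = T and a = "th1" and b = "\<theta> + 1"])
    show "DERIV T (sig \<theta>) :> D" unfolding D_def s_def[symmetric] by (rule T_deriv) (use s in auto)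
    show "D \<noteq> 0" using Dpos by simp
    show "th1 < \<theta>" "\<theta> < \<theta> + 1" using assms by auto
    fix y assume "th1 < y" "y < \<theta> + 1"
    thus "T (sig y) = y" using sig by blast
  next
    have "isCont sig (T s)"
      by (rule isCont_inverse_function2[where a = "s/2" and b = "(s+1)/2"])
         (use s sig_T T_cont in auto)
    thus "isCont sig \<theta>" using s by simp
  qed
  moreover have "inverse D = s * (1 - s^2) / qq \<theta>" using Dq by simp
  ultimately show "DERIV sig \<theta> :> sig \<theta> * (1 - sig \<theta>^2) / qq \<theta>" by (simp add: s_def)
qed

definition "F0 \<theta> = - ln ((1 - sig \<theta> ^ 2)/4) - 2*\<theta> - \<theta> * ln (sig \<theta> ^ 2)"
definition "F1 \<theta> = - ln (sig \<theta> ^ 2)"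
definition "F2 \<theta> = -2 * (1 - sig \<theta> ^ 2) / qq \<theta>"
definition F3e :: "real \<Rightarrow> real \<Rightarrow> real \<Rightarrow> real \<Rightarrow> real" where
  "F3e t s u q = (4* s^2*u*q + 2*u^2*(2*(1+t)* s^2 - q)) / q^3"
definition "F3 \<theta> = F3e \<theta> (sig \<theta>) (1 - sig \<theta>^2) (qq \<theta>)"
definition "J0 \<theta> = - (1/2) * ln (qq \<theta>) + (1/2) * ln 2"
definition J1e :: "real \<Rightarrow> real \<Rightarrow> real \<Rightarrow> real \<Rightarrow> real" where
  "J1e t s u q = - u * (2*(1+t)* s^2 - q) / (2*q^2)"
definition "J1 \<theta> = J1e \<theta> (sig \<theta>) (1 - sig \<theta>^2) (qq \<theta>)"
definition J2e :: "real \<Rightarrow> real \<Rightarrow> real \<Rightarrow> real \<Rightarrow> real" where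
  "J2e t s u q = - (q * (-2* s^2*u*(2*(1+t)* s^2 - q) + 2* s^2*u*q + 4*(1+t)* s^2*u^2
        - u^2*(2*(1+t)* s^2 - q)) - 2*u^2*(2*(1+t)* s^2 - q)^2) / (2*q^4)"
definition "J2 \<theta> = J2e \<theta> (sig \<theta>) (1 - sig \<theta>^2) (qq \<theta>)"

lemma qq_deriv: assumes "th1 < \<theta>"
  shows "DERIV qq \<theta> :> (1 - sig \<theta>^2) * (2*(1+\<theta>)* sig \<theta>^2 - qq \<theta>) / qq \<theta>"
proof -
  note ds = sig_deriv[OF assms]
  have e: "qq = (\<lambda>x. sig x ^ 2 - x * (1 - sig x ^ 2))" by (simp add: qq_def[abs_def])
  have "DERIV (\<lambda>x. sig x ^ 2 - x * (1 - sig x ^ 2)) \<theta> :> 2 * sig \<theta> * (sig \<theta> * (1 - sig \<theta>^2) / qq \<theta>) * (1 + \<theta>) - (1 - sig \<theta>^2)"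
    by (rule derivative_eq_intros ds refl | simp)+ (use ds(2) in \<open>simp add: field_simps\<close>)
  hence "DERIV qq \<theta> :> 2 * sig \<theta> * (sig \<theta> * (1 - sig \<theta>^2) / qq \<theta>) * (1 + \<theta>) - (1 - sig \<theta>^2)"
    by (subst e)
  moreover have "2 * sig \<theta> * (sig \<theta> * (1 - sig \<theta>^2) / qq \<theta>) * (1 + \<theta>) - (1 - sig \<theta>^2)
     = (1 - sig \<theta>^2) * (2*(1+\<theta>)* sig \<theta>^2 - qq \<theta>) / qq \<theta>"
    using ds(2) by (simp add: field_simps power2_eq_square)
  ultimately show ?thesis by simp
qed

lemma sig_facts: assumes "th1 < \<theta>" shows "0 < sig \<theta>" "sig \<theta> < 1" "0 < 1 - sig \<theta>^2" "0 < qq \<theta>"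
proof -
  show "0 < sig \<theta>" "sig \<theta> < 1" using sig[OF assms] by auto
  thus "0 < 1 - sig \<theta>^2" using sq_lt1[of "sig \<theta>"] by auto
  show "0 < qq \<theta>" using sig_deriv[OF assms] by auto
qed

lemma alg_F0: fixes s q t L u :: real assumes "s \<noteq> 0" "u \<noteq> 0" "q \<noteq> 0"
  shows "- (1 / (u / 4) * (((0 - real 2 * (s * u / q * s ^ (2 - Suc 0))) * 4 - u * 0) / (4 * 4))) -
    (0 * t + 1 * 2) - (1 * L + 1 / s^2 * (real 2 * (s * u / q * s ^ (2 - Suc 0))) * t)
    = 2*(s^2 - t*u)/q - 2 - L"
  using assms by (simp add: field_simps power2_eq_square)

lemma F0_deriv: assumes "th1 < \<theta>" shows "DERIV F0 \<theta> :> F1 \<theta>"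
proof -
  note ds = sig_deriv[OF assms] and sf = sig_facts[OF assms]
  have nz: "sig \<theta> \<noteq> 0" "1 - sig \<theta>^2 \<noteq> 0" "qq \<theta> \<noteq> 0" using sf by auto
  have p1: "0 < (1 - sig \<theta>^2)/4" "0 < sig \<theta> ^ 2" "(4::real) \<noteq> 0" using sf by auto
  have e: "F0 = (\<lambda>x. - ln ((1 - sig x ^ 2)/4) - 2*x - x * ln (sig x ^ 2))" by (simp add: F0_def[abs_def])
  have F1alt: "F1 \<theta> = 2*(sig \<theta>^2 - \<theta>*(1-sig \<theta>^2))/qq \<theta> - 2 - ln(sig \<theta>^2)"
    using sf by (simp add: F1_def qq_def[symmetric])
  have "DERIV (\<lambda>x. - ln ((1 - sig x ^ 2)/4) - 2*x - x * ln (sig x ^ 2)) \<theta> :> F1 \<theta>"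
    unfolding F1alt
    apply (rule derivative_eq_intros ds refl p1)+
    by (rule alg_F0) (use nz in auto)
  thus ?thesis by (subst e)
qed

lemma F1_deriv: assumes "th1 < \<theta>" shows "DERIV F1 \<theta> :> F2 \<theta>"
proof -
  note ds = sig_deriv[OF assms] and sf = sig_facts[OF assms]
  have nz: "sig \<theta> \<noteq> 0" "1 - sig \<theta>^2 \<noteq> 0" "qq \<theta> \<noteq> 0" using sf by auto
  have p1: "0 < (1 - sig \<theta>^2)/4" "0 < sig \<theta> ^ 2" "(4::real) \<noteq> 0" "qq \<theta> \<noteq> 0" using sf by auto
  have e: "F1 = (\<lambda>x. - ln (sig x ^ 2))" by (simp add: F1_def[abs_def])
  have "DERIV (\<lambda>x. - ln (sig x ^ 2)) \<theta> :> F2 \<theta>"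
    apply (rule derivative_eq_intros ds refl p1)+
    using nz by (simp add: F2_def field_simps) algebra
  thus ?thesis by (subst e)
qed

lemma F2_deriv: assumes "th1 < \<theta>" shows "DERIV F2 \<theta> :> F3 \<theta>"
proof -
  note ds = sig_deriv[OF assms] and sf = sig_facts[OF assms] and dq = qq_deriv[OF assms]
  have nz: "sig \<theta> \<noteq> 0" "1 - sig \<theta>^2 \<noteq> 0" "qq \<theta> \<noteq> 0" using sf by auto
  have p1: "0 < (1 - sig \<theta>^2)/4" "0 < sig \<theta> ^ 2" "(4::real) \<noteq> 0" "qq \<theta> \<noteq> 0" using sf by auto
  have e: "F2 = (\<lambda>x. -2 * (1 - sig x ^ 2) / qq x)" by (simp add: F2_def[abs_def])
  have "DERIV (\<lambda>x. -2 * (1 - sig x ^ 2) / qq x) \<theta> :> F3 \<theta>"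
    apply (rule derivative_eq_intros ds dq refl p1)+
    using nz by (simp add: F3_def F3e_def field_simps) algebra
  thus ?thesis by (subst e)
qed

lemma J0_deriv: assumes "th1 < \<theta>" shows "DERIV J0 \<theta> :> J1 \<theta>"
proof -
  note ds = sig_deriv[OF assms] and sf = sig_facts[OF assms] and dq = qq_deriv[OF assms]
  have nz: "sig \<theta> \<noteq> 0" "1 - sig \<theta>^2 \<noteq> 0" "qq \<theta> \<noteq> 0" using sf by auto
  have p1: "0 < (1 - sig \<theta>^2)/4" "0 < sig \<theta> ^ 2" "(4::real) \<noteq> 0" "qq \<theta> \<noteq> 0" "qq \<theta> > 0" using sf by auto
  have e: "J0 = (\<lambda>x. - (1/2) * ln (qq x) + (1/2) * ln 2)" by (simp add: J0_def[abs_def])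
  have "DERIV (\<lambda>x. - (1/2) * ln (qq x) + (1/2) * ln 2) \<theta> :> J1 \<theta>"
    apply (rule derivative_eq_intros ds dq refl p1)+
    using nz by (simp add: J1_def J1e_def field_simps) algebra
  thus ?thesis by (subst e)
qed

lemma J1_deriv: assumes "th1 < \<theta>" shows "DERIV J1 \<theta> :> J2 \<theta>"
proof -
  note ds = sig_deriv[OF assms] and sf = sig_facts[OF assms] and dq = qq_deriv[OF assms]
  have nz: "sig \<theta> \<noteq> 0" "1 - sig \<theta>^2 \<noteq> 0" "qq \<theta> \<noteq> 0" using sf by auto
  have p1: "0 < (1 - sig \<theta>^2)/4" "0 < sig \<theta> ^ 2" "(4::real) \<noteq> 0" "qq \<theta> \<noteq> 0" "qq \<theta> > 0"
     "2 * qq \<theta> ^ 2 \<noteq> 0" using sf by auto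
  have e: "J1 = (\<lambda>x. - (1 - sig x^2) * (2*(1+x)* sig x^2 - qq x) / (2*qq x^2))" by (simp add: J1_def[abs_def] J1e_def)
  have "DERIV (\<lambda>x. - (1 - sig x^2) * (2*(1+x)* sig x^2 - qq x) / (2*qq x^2)) \<theta> :> J2 \<theta>"
    apply (rule derivative_eq_intros ds dq refl p1)+
    using nz by (simp add: J2_def J2e_def field_simps) algebra
  thus ?thesis by (subst e)
qed

lemma deriv_open: assumes "open U" "\<theta> \<in> U" "\<And>x. x \<in> U \<Longrightarrow> DERIV g x :> g' x"
  "\<And>x. x \<in> U \<Longrightarrow> h x = g x" shows "deriv h \<theta> = g' \<theta>"
proof -
  have "eventually (\<lambda>x. x \<in> U) (nhds \<theta>)" using assms(1,2) eventually_nhds by blast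
  hence "eventually (\<lambda>x. h x = g x) (nhds \<theta>)" by eventually_elim (use assms(4) in auto)
  hence "deriv h \<theta> = deriv g \<theta>" by (rule deriv_cong_ev) simp
  also have "\<dots> = g' \<theta>" using assms(2,3) DERIV_imp_deriv by blast
  finally show ?thesis .
qed

lemma f_eq: assumes "th1 < \<theta>" shows "f_fun \<theta> = F0 \<theta>"
proof -
  have "1 - 4 * ((1 - sig \<theta>^2)/4) = sig \<theta>^2" by (simp add: field_simps)
  thus ?thesis unfolding f_fun_def F0_def lam_eq[OF assms] by simp
qed

lemma j_eq: assumes "th1 < \<theta>" shows "j_fun \<theta> = J0 \<theta>"
proof -
  have "1 - 4 * (\<theta> + 1) * lam \<theta> = qq \<theta>" unfolding lam_eq[OF assms] by (simp add: qq_def field_simps)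
  thus ?thesis unfolding j_fun_def J0_def by simp
qed

lemma f3_eq: assumes "th1 < \<theta>" shows "(deriv ^^ 3) f_fun \<theta> = F3 \<theta>"
proof -
  have U: "open {th1<..}" by simp
  have d1: "deriv f_fun x = F1 x" if "x \<in> {th1<..}" for x
    by (rule deriv_open[OF U that, where g = F0]) (auto intro: F0_deriv f_eq)
  have d2: "deriv (deriv f_fun) x = F2 x" if "x \<in> {th1<..}" for x
    by (rule deriv_open[OF U that, where g = F1]) (auto intro: F1_deriv d1)
  have d3: "deriv (deriv (deriv f_fun)) x = F3 x" if "x \<in> {th1<..}" for x
    by (rule deriv_open[OF U that, where g = F2]) (auto intro: F2_deriv d2)
  show ?thesis using d3[of \<theta>] assms by (simp add: numeral_3_eq_3)
qed

lemma j2_eq: assumes "th1 < \<theta>" shows "(deriv ^^ 2) j_fun \<theta> = J2 \<theta>"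
proof -
  have U: "open {th1<..}" by simp
  have d1: "deriv j_fun x = J1 x" if "x \<in> {th1<..}" for x
    by (rule deriv_open[OF U that, where g = J0]) (auto intro: J0_deriv j_eq)
  have d2: "deriv (deriv j_fun) x = J2 x" if "x \<in> {th1<..}" for x
    by (rule deriv_open[OF U that, where g = J1]) (auto intro: J1_deriv d1)
  show ?thesis using d2[of \<theta>] assms by (simp add: numeral_2_eq_2)
qed

lemma u_bound: assumes "th1 < \<theta>" shows "1 - sig \<theta>^2 \<le> 4 * exp 2 * exp (-2*\<theta>)"
proof -
  define s where "s = sig \<theta>"
  have s: "1/2 < s" "s < 1" "T s = \<theta>" using sig[OF assms] by (auto simp: s_def)
  have th: "0 \<le> \<theta>" using assms th1_pos by linarith
  have at: "artanh s = s * (\<theta> + 1)" using s by (simp add: T_def field_simps)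
  hence "ln ((1+s)/(1-s)) = 2* s*(\<theta>+1)" by (simp add: artanh_def)
  moreover have "(1+s)/(1-s) > 0" using s by simp
  ultimately have "(1+s)/(1-s) = exp (2* s*(\<theta>+1))" by (metis exp_ln)
  hence "1 - s = (1+s) / exp (2* s*(\<theta>+1))" using s
    by (metis div_by_0 divide_divide_eq_right mult.commute nonzero_mult_div_cancel_left exp_not_eq_zero diff_gt_0_iff_gt less_numeral_extra(3))
  hence e1: "1 - s = (1+s) * exp (-(2* s*(\<theta>+1)))" by (simp add: exp_minus divide_inverse)
  have "(1+s) * exp (-(2* s*(\<theta>+1))) \<le> 2 * exp (-(2* s*(\<theta>+1)))" using s by (intro mult_right_mono) auto
  hence e2: "1 - s \<le> 2 * exp (-(2* s*(\<theta>+1)))" using e1 by simp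
  have "exp (-(2* s*(\<theta>+1))) \<le> exp (-(\<theta>+1))"
  proof -
    have "(\<theta>+1) \<le> 2* s*(\<theta>+1)" using s th by (simp add: mult_right_mono[of 1 "2* s" "\<theta>+1", simplified])
    thus ?thesis by simp
  qed
  hence s1: "1 - s \<le> 2 * exp (-(\<theta>+1))" using e2 by linarith
  have "(\<theta>+1) * exp (-(\<theta>+1)) \<le> 1"
  proof -
    have "\<theta>+1 \<le> exp (\<theta>+1)" using exp_ge_add_one_self[of "\<theta>+1"] by linarith
    moreover have "(\<theta>+1) * exp (-(\<theta>+1)) = (\<theta>+1) / exp (\<theta>+1)" by (simp only: exp_minus divide_inverse)
    ultimately show ?thesis by (simp add: divide_le_eq_1)
  qed
  moreover have "(1 - s)*(\<theta>+1) \<le> (2 * exp (-(\<theta>+1)))*(\<theta>+1)" using s1 th by (intro mult_right_mono) auto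
  ultimately have "(1 - s)*(\<theta>+1) \<le> 2" by (simp add: algebra_simps)
  hence "2* s*(\<theta>+1) \<ge> 2*\<theta> - 2" by (simp add: algebra_simps)
  hence "exp (-(2* s*(\<theta>+1))) \<le> exp (-(2*\<theta> - 2))" by simp
  also have "\<dots> = exp 2 * exp (-2*\<theta>)" by (simp add: exp_add[symmetric])
  finally have "1 - s \<le> 2 * (exp 2 * exp (-2*\<theta>))" using e2 by linarith
  moreover have "1 - s^2 = (1-s)*(1+s)" by (simp add: power2_eq_square algebra_simps)
  moreover have "(1-s)*(1+s) \<le> (1-s)*2" using s by (intro mult_left_mono) auto
  ultimately have "1 - s^2 \<le> 2*(1-s)" by simp
  moreover have "2*(1-s) \<le> 4 * exp 2 * exp (-2*\<theta>)" using \<open>1 - s \<le> 2 * (exp 2 * exp (-2*\<theta>))\<close> by simp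
  ultimately show ?thesis unfolding s_def[symmetric] by linarith
qed


lemma main_bounds:
  "eventually (\<lambda>\<theta>. \<bar>F3 \<theta>\<bar> \<le> (320 * exp 2) * \<bar>(1+\<theta>)^2 * exp (-2*\<theta>)\<bar>
                 \<and> \<bar>J2 \<theta>\<bar> \<le> (1056 * exp 2) * \<bar>(1+\<theta>)^2 * exp (-2*\<theta>)\<bar>
                 \<and> th1 < \<theta>) at_top"
proof -
  have lim: "((\<lambda>\<theta>::real. (1+\<theta>) * (4*exp 2*exp(-2*\<theta>))) \<longlongrightarrow> 0) at_top"
    by real_asymp
  have ev1: "eventually (\<lambda>\<theta>::real. (1+\<theta>) * (4*exp 2*exp(-2*\<theta>)) < 1/2) at_top"
    using order_tendstoD(2)[OF lim, of "1/2"] by simp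
  have ev2: "eventually (\<lambda>\<theta>::real. th1 < \<theta>) at_top" by (rule eventually_gt_at_top)
  show ?thesis using ev1 ev2
  proof eventually_elim
    case (elim \<theta>)
    define s where "s = sig \<theta>"
    define u where "u = 1 - s^2"
    define q where "q = qq \<theta>"
    define B where "B = 4*exp 2*exp(-2*\<theta>)"
    have sf: "0 < s" "s < 1" "0 < u" using sig_facts[OF elim(2)] by (auto simp: s_def u_def)
    have th: "0 \<le> \<theta>" using elim(2) th1_pos by linarith
    have uB: "u \<le> B" using u_bound[OF elim(2)] by (simp add: u_def s_def B_def)
    have u1: "u \<le> 1" using sf by (simp add: u_def)
    have qeq: "q = 1 - (1+\<theta>)*u" by (simp add: q_def qq_def u_def s_def algebra_simps)
    have "(1+\<theta>)*u \<le> (1+\<theta>)*B" using uB th by (intro mult_left_mono) auto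
    hence q12: "1/2 \<le> q" using elim(1) qeq by (simp add: B_def)
    have q1: "q \<le> 1" using qeq th sf by simp
    have Bg: "B * (1+\<theta>)^k \<le> 4*exp 2 * \<bar>(1+\<theta>)^2 * exp (-2*\<theta>)\<bar>" if "k \<le> 2" for k
    proof -
      have "(1+\<theta>)^k \<le> (1+\<theta>)^2" using th that by (intro power_increasing) auto
      hence "B * (1+\<theta>)^k \<le> B * (1+\<theta>)^2" by (intro mult_left_mono) (auto simp: B_def)
      also have "\<dots> = 4*exp 2 * \<bar>(1+\<theta>)^2 * exp (-2*\<theta>)\<bar>" by (simp add: B_def abs_mult)
      finally show ?thesis .
    qed
    have "\<bar>F3 \<theta>\<bar> \<le> 8 * \<bar>4 * s^2 * u * q + 2*u^2*(2*(1+\<theta>)* s^2 - q)\<bar>"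
      unfolding F3_def F3e_def s_def[symmetric] u_def[symmetric] q_def[symmetric]
      by (rule abs_div_q3[OF q12])
    also have "\<dots> \<le> 8 * (10 * u * (1+\<theta>))"
      using F3_num_bound[of s u q \<theta>] sf u1 q12 q1 th by simp
    also have "\<dots> \<le> 80 * (B * (1+\<theta>)^1)" using uB th by (simp add: mult_right_mono)
    also have "\<dots> \<le> 80 * (4*exp 2 * \<bar>(1+\<theta>)^2 * exp (-2*\<theta>)\<bar>)" using Bg[of 1] by simp
    finally have A: "\<bar>F3 \<theta>\<bar> \<le> (320 * exp 2) * \<bar>(1+\<theta>)^2 * exp (-2*\<theta>)\<bar>" by simp
    define W where "W = 2*(1+\<theta>)* s^2 - q"
    have "\<bar>J2 \<theta>\<bar> = \<bar>(q * (-2* s^2*u*W + 2* s^2*u*q + 4*(1+\<theta>)* s^2*u^2 - u^2*W) - 2*u^2*W^2) / (2*q^4)\<bar>"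
      unfolding J2_def J2e_def s_def[symmetric] u_def[symmetric] q_def[symmetric] W_def
      by (simp add: abs_minus_commute minus_divide_left[symmetric])
    also have "\<dots> \<le> 8 * \<bar>q * (-2* s^2*u*W + 2* s^2*u*q + 4*(1+\<theta>)* s^2*u^2 - u^2*W) - 2*u^2*W^2\<bar>"
      by (rule abs_div_q4[OF q12])
    also have "\<dots> \<le> 8 * (33 * u * (1+\<theta>)^2)"
      using J2_num_bound[of s u q \<theta> W] sf u1 q12 q1 th W_def by simp
    also have "\<dots> \<le> 264 * (B * (1+\<theta>)^2)" using uB th by (simp add: mult_right_mono)
    also have "\<dots> \<le> 264 * (4*exp 2 * \<bar>(1+\<theta>)^2 * exp (-2*\<theta>)\<bar>)" using Bg[of 2] by simp
    finally have J: "\<bar>J2 \<theta>\<bar> \<le> (1056 * exp 2) * \<bar>(1+\<theta>)^2 * exp (-2*\<theta>)\<bar>" by simp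
    show ?case using A J elim(2) by simp
  qed
qed

theorem proposition6:
  fixes a :: real
  assumes "0 < a" and "a < 2"
  shows "(\<lambda>\<theta>. (deriv ^^ 3) f_fun \<theta>) \<in> O[at_top](\<lambda>\<theta>. exp (- a * \<theta>))
     \<and> (\<lambda>\<theta>. (deriv ^^ 2) j_fun \<theta>) \<in> O[at_top](\<lambda>\<theta>. exp (- a * \<theta>))"
proof -
  have g: "(\<lambda>\<theta>::real. (1+\<theta>)^2 * exp(-2*\<theta>)) \<in> O[at_top](\<lambda>\<theta>. exp(-a*\<theta>))"
    using assms by real_asymp
  have "(\<lambda>\<theta>. (deriv ^^ 3) f_fun \<theta>) \<in> O[at_top](\<lambda>\<theta>::real. (1+\<theta>)^2 * exp(-2*\<theta>))"
  proof (rule bigoI)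
    show "eventually (\<lambda>\<theta>. norm ((deriv ^^ 3) f_fun \<theta>) \<le> (320 * exp 2) * norm ((1+\<theta>)^2 * exp(-2*\<theta>))) at_top"
      using main_bounds by eventually_elim (simp add: f3_eq)
  qed
  moreover have "(\<lambda>\<theta>. (deriv ^^ 2) j_fun \<theta>) \<in> O[at_top](\<lambda>\<theta>::real. (1+\<theta>)^2 * exp(-2*\<theta>))"
  proof (rule bigoI)
    show "eventually (\<lambda>\<theta>. norm ((deriv ^^ 2) j_fun \<theta>) \<le> (1056 * exp 2) * norm ((1+\<theta>)^2 * exp(-2*\<theta>))) at_top"
      using main_bounds by eventually_elim (simp add: j2_eq)
  qed
  ultimately show ?thesis using g landau_o.big_trans by blast
qed

end
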